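(* Let $s,t$ be processes, $\mathcal{Z}_s\in\mathrm{res}(s)$ with initial state $z_s$ and $\mathcal{Z}_t\in\mathrm{res}(t)$ with initial state $z_t$. Then $\Psi_{\mathcal{Z}_s}=\Psi_{\mathcal{Z}_t}$ if and only if $\Pr(\mathcal{C}(z_s,\alpha))=\Pr(\mathcal{C}(z_t,\alpha))$ for all $\alpha\in A^\star$.
   Context: PTS $(\mathcal{S},A,\to)$ with finitely supported distributions; processes image-finite and finite. Computations $c=s_0\xrightarrow{a_1}\cdots\xrightarrow{a_n}s_n$ via transitions $s_{i-1}\xrightarrow{a_i}\pi_i$, $s_i\in\mathrm{supp}(\pi_i)$; $\Pr(c)=\prod\pi_i(s_i)$ (empty computation: 1); $\mathrm{tr}(c)=a_1\cdots a_n$; $\mathcal{C}(z,\alpha)$ = computations from $z$ with trace $\alpha$; maximal = not a proper prefix of another computation from the same process; $\mathcal{C}_{\max}(z)$, $\mathcal{C}_{\max}(z,\alpha)$; $\Pr$ of a set is the sum. A resolution of $s$ is a PTS $\mathcal{Z}=(Z,A,\to_{\mathcal{Z}})$ with $\mathrm{corr}\colon Z\to\mathcal{S}$ and initial state $z_s$, $\mathrm{corr}(z_s)=s$, such that $z_s$ is in no target support, every other state is in the support of a target of a transition from a different state, every $z\xrightarrow{a}_{\mathcal{Z}}\pi$ is matched by $\mathrm{corr}(z)\xrightarrow{a}\pi'$ with $\pi(z')=\pi'(\mathrm{corr}(z'))$, and each state has at most one outgoing transition. Trace formulae $\Phi::=\top\mid\langle a\rangle\Phi$; tracing formula $\Phi_\varepsilon=\top$,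 $\Phi_{a\alpha}=\langle a\rangle\Phi_\alpha$. Trace distribution formulae $\bigoplus_{i\in I}r_i\Phi_i$ ($I$ finite nonempty, $\Phi_i$ pairwise distinct, $r_i\in(0,1]$, $\sum r_i=1$) are identified with probability distributions on trace formulae; equality means equality of these distributions. Mimicking formula of $\mathcal{Z}$ with initial state $z$: $\Psi_{\mathcal{Z}}=\bigoplus_{\alpha\in\mathrm{tr}(\mathcal{C}_{\max}(z))}\Pr(\mathcal{C}_{\max}(z,\alpha))\,\Phi_\alpha$. *)

theory Defs
  imports "HOL-Probability.Probability" "HOL-Library.Sublist"
begin

text \<open>A PTS over states 's and actions 'a is given by its transition relation
  T :: ('s * 'a * 's pmf) set ; (s,a,pi) in T means s --a--> pi.\<close>

type_synonym ('s,'a) pts = "('s \<times> 'a \<times> 's pmf) set"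

definition fin_supp_pts :: "('s,'a) pts \<Rightarrow> bool" where
  "fin_supp_pts T \<longleftrightarrow> (\<forall>(s,a,\<pi>)\<in>T. finite (set_pmf \<pi>))"

definition image_finite :: "('s,'a) pts \<Rightarrow> bool" where
  "image_finite T \<longleftrightarrow> (\<forall>s a. finite {\<pi>. (s,a,\<pi>) \<in> T})"

fun is_comp :: "('s,'a) pts \<Rightarrow> 's \<Rightarrow> ('a \<times> 's pmf \<times> 's) list \<Rightarrow> bool" where
  "is_comp T z [] = True"
| "is_comp T z ((a,\<pi>,z') # cs) = ((z,a,\<pi>) \<in> T \<and> z' \<in> set_pmf \<pi> \<and> is_comp T z' cs)"

definition comps :: "('s,'a) pts \<Rightarrow> 's \<Rightarrow> ('a \<times> 's pmf \<times> 's) list set" where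
  "comps T z = {c. is_comp T z c}"

definition comp_prob :: "('a \<times> 's pmf \<times> 's) list \<Rightarrow> real" where
  "comp_prob c = prod_list (map (\<lambda>(a,\<pi>,z'). pmf \<pi> z') c)"

definition comp_trace :: "('a \<times> 's pmf \<times> 's) list \<Rightarrow> 'a list" where
  "comp_trace c = map fst c"

definition Pr :: "('a \<times> 's pmf \<times> 's) list set \<Rightarrow> real" where
  "Pr C = (\<Sum>c\<in>C. comp_prob c)"

definition comps_tr :: "('s,'a) pts \<Rightarrow> 's \<Rightarrow> 'a list \<Rightarrow> ('a \<times> 's pmf \<times> 's) list set" where
  "comps_tr T z \<alpha> = {c \<in> comps T z. comp_trace c = \<alpha>}"

definition comps_max :: "('s,'a) pts \<Rightarrow> 's \<Rightarrow> ('a \<times> 's pmf \<times> 's) list set" where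
  "comps_max T z = {c \<in> comps T z. \<not> (\<exists>c'\<in>comps T z. strict_prefix c c')}"

definition comps_max_tr :: "('s,'a) pts \<Rightarrow> 's \<Rightarrow> 'a list \<Rightarrow> ('a \<times> 's pmf \<times> 's) list set" where
  "comps_max_tr T z \<alpha> = {c \<in> comps_max T z. comp_trace c = \<alpha>}"

definition finite_process :: "('s,'a) pts \<Rightarrow> 's \<Rightarrow> bool" where
  "finite_process T s \<longleftrightarrow> (\<exists>n. \<forall>c\<in>comps T s. length c \<le> n)"

definition is_resolution ::
  "('s,'a) pts \<Rightarrow> 's \<Rightarrow> 'z set \<Rightarrow> ('z,'a) pts \<Rightarrow> ('z \<Rightarrow> 's) \<Rightarrow> 'z \<Rightarrow> bool" where
  "is_resolution T s Z TZ corr z0 \<longleftrightarrow>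
     z0 \<in> Z \<and> corr z0 = s \<and>
     (\<forall>(z,a,\<pi>)\<in>TZ. z \<in> Z \<and> set_pmf \<pi> \<subseteq> Z) \<and>
     (\<forall>(z,a,\<pi>)\<in>TZ. z0 \<notin> set_pmf \<pi>) \<and>
     (\<forall>z\<in>Z. z \<noteq> z0 \<longrightarrow> (\<exists>(z',a,\<pi>)\<in>TZ. z' \<noteq> z \<and> z \<in> set_pmf \<pi>)) \<and>
     (\<forall>(z,a,\<pi>)\<in>TZ. \<exists>\<pi>'. (corr z, a, \<pi>') \<in> T \<and>
          (\<forall>z'\<in>set_pmf \<pi>. pmf \<pi> z' = pmf \<pi>' (corr z'))) \<and>
     (\<forall>z a \<pi> b \<rho>. (z,a,\<pi>) \<in> TZ \<and> (z,b,\<rho>) \<in> TZ \<longrightarrow> a = b \<and> \<pi> = \<rho>)"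

datatype 'a trace_formula = TTop | Diam 'a "'a trace_formula"

fun tracing :: "'a list \<Rightarrow> 'a trace_formula" where
  "tracing [] = TTop"
| "tracing (a # \<alpha>) = Diam a (tracing \<alpha>)"

text \<open>Trace distribution formulae are identified with (finitely supported) probability
  distributions on trace formulae, represented by their weight function.\<close>
definition mimicking :: "('z,'a) pts \<Rightarrow> 'z \<Rightarrow> 'a trace_formula \<Rightarrow> real" where
  "mimicking TZ z = (\<lambda>\<Phi>. \<Sum>\<alpha>\<in>comp_trace ` comps_max TZ z.
       if tracing \<alpha> = \<Phi> then Pr (comps_max_tr TZ z \<alpha>) else 0)"

end

theory Submission
  imports Defs
begin

definition detT :: "('z,'a) pts \<Rightarrow> bool" where
  "detT T \<longleftrightarrow> (\<forall>z a \<pi> b \<rho>. (z,a,\<pi>) \<in> T \<and> (z,b,\<rho>) \<in> T \<longrightarrow> a = b \<and> \<pi> = \<rho>)"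

definition fsupp :: "('z,'a) pts \<Rightarrow> bool" where
  "fsupp T \<longleftrightarrow> (\<forall>(z,a,\<pi>)\<in>T. finite (set_pmf \<pi>))"

lemma comps_Nil[simp]: "[] \<in> comps T z" by (simp add: comps_def)

lemma comps_Cons[simp]: "((a,\<pi>,z')#c \<in> comps T z) = ((z,a,\<pi>)\<in>T \<and> z' \<in> set_pmf \<pi> \<and> c \<in> comps T z')"
  by (simp add: comps_def)

lemma comp_prob_Cons[simp]: "comp_prob ((a,\<pi>,z')#c) = pmf \<pi> z' * comp_prob c"
  by (simp add: comp_prob_def)

lemma comp_prob_append: "comp_prob (c @ d) = comp_prob c * comp_prob d"
  by (simp add: comp_prob_def)

lemma comps_notrans:
  assumes "\<forall>a \<pi>. (w,a,\<pi>) \<notin> T" shows "comps T w = {[]}"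
proof -
  have "c = []" if "c \<in> comps T w" for c
    using that assms by (cases c) auto
  then show ?thesis by auto
qed

lemma cmax_notrans:
  assumes "\<forall>a \<pi>. (w,a,\<pi>) \<notin> T" shows "comps_max T w = {[]}"
  using comps_notrans[OF assms] by (auto simp: comps_max_def)

lemma comps_trans:
  assumes "detT T" "(w,a,\<pi>) \<in> T"
  shows "comps T w = insert [] (\<Union>z'\<in>set_pmf \<pi>. Cons (a,\<pi>,z') ` comps T z')"
proof -
  have "c \<in> insert [] (\<Union>z'\<in>set_pmf \<pi>. Cons (a,\<pi>,z') ` comps T z')" if "c \<in> comps T w" for c
  proof (cases c)
    case (Cons x d)
    obtain b \<rho> z' where x: "x = (b,\<rho>,z')" by (cases x) auto
    with that Cons assms have "b = a" "\<rho> = \<pi>" unfolding detT_def by auto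
    with that Cons x show ?thesis by auto
  qed simp
  then show ?thesis using assms by auto
qed

lemma cmax_trans:
  assumes "detT T" "(w,a,\<pi>) \<in> T"
  shows "comps_max T w = (\<Union>z'\<in>set_pmf \<pi>. Cons (a,\<pi>,z') ` comps_max T z')"
proof (intro equalityI subsetI)
  fix c assume c: "c \<in> comps_max T w"
  then have cc: "c \<in> comps T w" and cm: "\<not> (\<exists>c'\<in>comps T w. strict_prefix c c')"
    by (auto simp: comps_max_def)
  show "c \<in> (\<Union>z'\<in>set_pmf \<pi>. Cons (a,\<pi>,z') ` comps_max T z')"
  proof (cases c)
    case Nil
    obtain z' where "z' \<in> set_pmf \<pi>" using set_pmf_not_empty by fast
    then have "[(a,\<pi>,z')] \<in> comps T w" using assms by simp
    moreover have "strict_prefix [] [(a,\<pi>,z')]" by (simp add: strict_prefix_def)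
    ultimately show ?thesis using cm Nil by blast
  next
    case (Cons x d)
    obtain b \<rho> z' where x: "x = (b,\<rho>,z')" by (cases x) auto
    with cc Cons assms have eq: "b = a" "\<rho> = \<pi>"
      unfolding detT_def by auto
    with cc Cons x have z': "z' \<in> set_pmf \<pi>" and d: "d \<in> comps T z'" by auto
    have "\<not> (\<exists>e\<in>comps T z'. strict_prefix d e)"
    proof
      assume "\<exists>e\<in>comps T z'. strict_prefix d e"
      then obtain e where "e \<in> comps T z'" "strict_prefix d e" by blast
      then have "(a,\<pi>,z')#e \<in> comps T w" "strict_prefix c ((a,\<pi>,z')#e)"
        using assms z' Cons x eq by auto
      with cm show False by blast
    qed
    with d have "d \<in> comps_max T z'" by (simp add: comps_max_def)
    with z' Cons x eq show ?thesis by auto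
  qed
next
  fix c assume "c \<in> (\<Union>z'\<in>set_pmf \<pi>. Cons (a,\<pi>,z') ` comps_max T z')"
  then obtain z' d where z': "z' \<in> set_pmf \<pi>" and d: "d \<in> comps_max T z'" and c: "c = (a,\<pi>,z')#d"
    by auto
  from d have dc: "d \<in> comps T z'" and dm: "\<not> (\<exists>e\<in>comps T z'. strict_prefix d e)"
    by (auto simp: comps_max_def)
  have "\<not> (\<exists>c'\<in>comps T w. strict_prefix c c')"
  proof
    assume "\<exists>c'\<in>comps T w. strict_prefix c c'"
    then obtain c' where c': "c' \<in> comps T w" "strict_prefix c c'" by blast
    then obtain e where "c' = (a,\<pi>,z')#e" "strict_prefix d e" using c
      by (cases c') (auto simp: strict_prefix_def)
    with c' z' have "e \<in> comps T z'" "strict_prefix d e" by auto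
    with dm show False by blast
  qed
  with c z' dc assms show "c \<in> comps_max T w" by (simp add: comps_max_def)
qed


lemma mass_step:
  assumes det: "detT T" and tr: "(w,a,\<pi>) \<in> T" and fs: "finite (set_pmf \<pi>)"
    and IH: "\<And>z'. z' \<in> set_pmf \<pi> \<Longrightarrow> finite (comps T z') \<and> Pr (comps_max T z') = 1"
  shows "finite (comps T w) \<and> Pr (comps_max T w) = 1"
proof
  show "finite (comps T w)" using comps_trans[OF det tr] fs IH by auto
  have fm: "finite (comps_max T z')" if "z' \<in> set_pmf \<pi>" for z'
    using conjunct1[OF IH[OF that]] by (rule rev_finite_subset) (auto simp: comps_max_def)
  have "Pr (comps_max T w) = (\<Sum>z'\<in>set_pmf \<pi>. Pr (Cons (a,\<pi>,z') ` comps_max T z'))"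
    unfolding cmax_trans[OF det tr] Pr_def
    by (rule sum.UNION_disjoint) (use fs fm in auto)
  also have "\<dots> = (\<Sum>z'\<in>set_pmf \<pi>. pmf \<pi> z' * Pr (comps_max T z'))"
  proof (rule sum.cong[OF refl])
    fix z' assume "z' \<in> set_pmf \<pi>"
    have "Pr (Cons (a,\<pi>,z') ` comps_max T z') = (\<Sum>d\<in>comps_max T z'. comp_prob ((a,\<pi>,z')#d))"
      unfolding Pr_def by (rule sum.reindex_cong[where l="Cons (a,\<pi>,z')"]) auto
    also have "\<dots> = pmf \<pi> z' * Pr (comps_max T z')"
      by (simp add: Pr_def sum_distrib_left)
    finally show "Pr (Cons (a,\<pi>,z') ` comps_max T z') = pmf \<pi> z' * Pr (comps_max T z')" .
  qed
  also have "\<dots> = (\<Sum>z'\<in>set_pmf \<pi>. pmf \<pi> z')" using IH by simp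
  also have "\<dots> = 1" using fs by (simp add: sum_pmf_eq_1)
  finally show "Pr (comps_max T w) = 1" .
qed

lemma mass:
  assumes det: "detT T" and fs: "fsupp T"
  shows "\<forall>c\<in>comps T w. length c \<le> n \<Longrightarrow> finite (comps T w) \<and> Pr (comps_max T w) = 1"
proof (induction n arbitrary: w)
  case 0
  show ?case
  proof (cases "\<exists>a \<pi>. (w,a,\<pi>) \<in> T")
    case True
    then obtain a \<pi> where tr: "(w,a,\<pi>) \<in> T" by blast
    obtain z' where "z' \<in> set_pmf \<pi>" using set_pmf_not_empty by fast
    with tr have "[(a,\<pi>,z')] \<in> comps T w" by simp
    with 0 show ?thesis by fastforce
  next
    case False
    then show ?thesis using comps_notrans[of w T] cmax_notrans[of w T]
      by (simp add: Pr_def comp_prob_def)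
  qed
next
  case (Suc n)
  show ?case
  proof (cases "\<exists>a \<pi>. (w,a,\<pi>) \<in> T")
    case True
    then obtain a \<pi> where tr: "(w,a,\<pi>) \<in> T" by blast
    show ?thesis
    proof (rule mass_step[OF det tr])
      show "finite (set_pmf \<pi>)" using fs tr unfolding fsupp_def by auto
      fix z' assume z': "z' \<in> set_pmf \<pi>"
      have "\<forall>c\<in>comps T z'. length c \<le> n"
      proof
        fix c assume "c \<in> comps T z'"
        then have "(a,\<pi>,z')#c \<in> comps T w" using tr z' by simp
        with Suc.prems show "length c \<le> n" by fastforce
      qed
      then show "finite (comps T z') \<and> Pr (comps_max T z') = 1" by (rule Suc.IH)
    qed
  next
    case False
    then show ?thesis using comps_notrans[of w T] cmax_notrans[of w T]
      by (simp add: Pr_def comp_prob_def)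
  qed
qed

definition endst :: "'z \<Rightarrow> ('a \<times> 'z pmf \<times> 'z) list \<Rightarrow> 'z" where
  "endst z c = last (z # map (snd \<circ> snd) c)"

lemma is_comp_append: "is_comp T z (c @ d) \<longleftrightarrow> is_comp T z c \<and> is_comp T (endst z c) d"
proof (induction c arbitrary: z)
  case Nil then show ?case by (simp add: endst_def)
next
  case (Cons x c)
  obtain a \<pi> z' where x: "x = (a,\<pi>,z')" by (cases x) auto
  have "endst z (x # c) = endst z' c" by (simp add: endst_def x)
  with Cons show ?case by (simp add: x)
qed

lemma comps_append: "c @ d \<in> comps T z \<longleftrightarrow> c \<in> comps T z \<and> d \<in> comps T (endst z c)"
  by (simp add: comps_def is_comp_append)

lemma ext_sum:
  assumes det: "detT T" and fs: "fsupp T" and bd: "\<forall>c\<in>comps T z. length c \<le> N"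
    and c: "c \<in> comps T z"
  shows "(\<Sum>d\<in>{d\<in>comps_max T z. prefix c d}. comp_prob d) = comp_prob c"
proof -
  let ?w = "endst z c"
  have seteq: "{d\<in>comps_max T z. prefix c d} = (\<lambda>e. c @ e) ` comps_max T ?w"
  proof (intro equalityI subsetI)
    fix d assume "d \<in> {d\<in>comps_max T z. prefix c d}"
    then have dm: "d \<in> comps_max T z" and p: "prefix c d" by auto
    from p obtain e where de: "d = c @ e" unfolding prefix_def by blast
    from dm have dc: "d \<in> comps T z" and nm: "\<not> (\<exists>c'\<in>comps T z. strict_prefix d c')"
      by (auto simp: comps_max_def)
    have ec: "e \<in> comps T ?w" using dc unfolding de comps_append by simp
    have "\<not> (\<exists>e'\<in>comps T ?w. strict_prefix e e')"
    proof
      assume "\<exists>e'\<in>comps T ?w. strict_prefix e e'"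
      then obtain e' where "e' \<in> comps T ?w" "strict_prefix e e'" by blast
      then have "c @ e' \<in> comps T z" "strict_prefix d (c @ e')"
        using c de comps_append[of c e' T z] by (simp_all add: strict_prefix_def)
      with nm show False by blast
    qed
    with ec have "e \<in> comps_max T ?w" by (simp add: comps_max_def)
    with de show "d \<in> (\<lambda>e. c @ e) ` comps_max T ?w" by blast
  next
    fix d assume "d \<in> (\<lambda>e. c @ e) ` comps_max T ?w"
    then obtain e where de: "d = c @ e" and em: "e \<in> comps_max T ?w" by auto
    from em have ec: "e \<in> comps T ?w" and nm: "\<not> (\<exists>e'\<in>comps T ?w. strict_prefix e e')"
      by (auto simp: comps_max_def)
    have dc: "d \<in> comps T z" using c ec unfolding de comps_append by simp
    have "\<not> (\<exists>c'\<in>comps T z. strict_prefix d c')"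
    proof
      assume "\<exists>c'\<in>comps T z. strict_prefix d c'"
      then obtain c' where c': "c' \<in> comps T z" "strict_prefix d c'" by blast
      then obtain f where f: "c' = (c @ e) @ f" "f \<noteq> []" using de
        unfolding strict_prefix_def prefix_def by blast
      then have "c' = c @ (e @ f)" by simp
      with c' have "e @ f \<in> comps T ?w" using comps_append[of c "e @ f" T z] by simp
      moreover have "strict_prefix e (e @ f)" using f(2) by (simp add: strict_prefix_def)
      ultimately have "e @ f \<in> comps T ?w" "strict_prefix e (e @ f)" by auto
      with nm show False by blast
    qed
    with dc have "d \<in> comps_max T z" by (simp add: comps_max_def)
    with de show "d \<in> {d\<in>comps_max T z. prefix c d}" by simp
  qed
  have bdw: "\<forall>e\<in>comps T ?w. length e \<le> N"
  proof
    fix e assume "e \<in> comps T ?w"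
    then have "c @ e \<in> comps T z" using c unfolding comps_append by simp
    with bd have "length (c @ e) \<le> N" by blast
    then show "length e \<le> N" by simp
  qed
  have m: "Pr (comps_max T ?w) = 1" using mass[OF det fs bdw] by blast
  have "(\<Sum>d\<in>{d\<in>comps_max T z. prefix c d}. comp_prob d) = (\<Sum>e\<in>comps_max T ?w. comp_prob (c @ e))"
    unfolding seteq by (rule sum.reindex_cong[where l="\<lambda>e. c @ e"]) (auto simp: inj_on_def)
  also have "\<dots> = comp_prob c * Pr (comps_max T ?w)"
    by (simp add: comp_prob_append Pr_def sum_distrib_left)
  finally show ?thesis using m by simp
qed


lemma prefix_take: "prefix xs ys \<Longrightarrow> take (length xs) ys = xs"
  by (auto simp: prefix_def)

lemma P_eq:
  assumes det: "detT T" and fs: "fsupp T" and bd: "\<forall>c\<in>comps T z. length c \<le> N"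
  shows "Pr (comps_tr T z \<alpha>) = (\<Sum>d\<in>{d\<in>comps_max T z. prefix \<alpha> (comp_trace d)}. comp_prob d)"
proof -
  have fin: "finite (comps T z)" using mass[OF det fs bd] by blast
  have finc: "finite (comps_tr T z \<alpha>)"
    using fin by (rule rev_finite_subset) (auto simp: comps_tr_def)
  have finm: "finite (comps_max T z)"
    using fin by (rule rev_finite_subset) (auto simp: comps_max_def)
  have "Pr (comps_tr T z \<alpha>) = (\<Sum>c\<in>comps_tr T z \<alpha>. \<Sum>d\<in>{d\<in>comps_max T z. prefix c d}. comp_prob d)"
    unfolding Pr_def by (rule sum.cong[OF refl], rule ext_sum[OF det fs bd, symmetric]) (auto simp: comps_tr_def)
  also have "\<dots> = (\<Sum>d\<in>(\<Union>c\<in>comps_tr T z \<alpha>. {d\<in>comps_max T z. prefix c d}). comp_prob d)"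
  proof (rule sum.UNION_disjoint[symmetric])
    show "finite (comps_tr T z \<alpha>)" by (rule finc)
    show "\<forall>c\<in>comps_tr T z \<alpha>. finite {d\<in>comps_max T z. prefix c d}" using finm by auto
    show "\<forall>c\<in>comps_tr T z \<alpha>. \<forall>c'\<in>comps_tr T z \<alpha>. c \<noteq> c' \<longrightarrow>
        {d\<in>comps_max T z. prefix c d} \<inter> {d\<in>comps_max T z. prefix c' d} = {}"
    proof (intro ballI impI)
      fix c c' assume c: "c \<in> comps_tr T z \<alpha>" and c': "c' \<in> comps_tr T z \<alpha>" and ne: "c \<noteq> c'"
      have len: "length c = length c'" using c c'
        by (auto simp: comps_tr_def comp_trace_def dest: arg_cong[where f=length])
      show "{d\<in>comps_max T z. prefix c d} \<inter> {d\<in>comps_max T z. prefix c' d} = {}"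
      proof (rule ccontr)
        assume "{d\<in>comps_max T z. prefix c d} \<inter> {d\<in>comps_max T z. prefix c' d} \<noteq> {}"
        then obtain d where "prefix c d" "prefix c' d" by blast
        then have "take (length c) d = c" "take (length c') d = c'" by (auto simp: prefix_take)
        with len ne show False by simp
      qed
    qed
  qed
  also have "(\<Union>c\<in>comps_tr T z \<alpha>. {d\<in>comps_max T z. prefix c d}) = {d\<in>comps_max T z. prefix \<alpha> (comp_trace d)}"
  proof (intro equalityI subsetI)
    fix d assume "d \<in> (\<Union>c\<in>comps_tr T z \<alpha>. {d\<in>comps_max T z. prefix c d})"
    then obtain c where c: "c \<in> comps_tr T z \<alpha>" and d: "d \<in> comps_max T z" "prefix c d" by blast
    from c have "comp_trace c = \<alpha>" by (simp add: comps_tr_def)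
    with d(2) have "prefix \<alpha> (comp_trace d)" unfolding comp_trace_def by (metis map_mono_prefix)
    with d(1) show "d \<in> {d\<in>comps_max T z. prefix \<alpha> (comp_trace d)}" by simp
  next
    fix d assume "d \<in> {d\<in>comps_max T z. prefix \<alpha> (comp_trace d)}"
    then have dm: "d \<in> comps_max T z" and p: "prefix \<alpha> (comp_trace d)" by auto
    let ?c = "take (length \<alpha>) d"
    have pc: "prefix ?c d" by (rule take_is_prefix)
    have dc: "d \<in> comps T z" using dm by (simp add: comps_max_def)
    have "?c @ drop (length \<alpha>) d \<in> comps T z" using dc by simp
    then have cc: "?c \<in> comps T z" unfolding comps_append by simp
    have "comp_trace ?c = take (length \<alpha>) (comp_trace d)" by (simp add: comp_trace_def take_map)
    also have "\<dots> = \<alpha>" using p by (rule prefix_take)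
    finally have "?c \<in> comps_tr T z \<alpha>" using cc by (simp add: comps_tr_def)
    with dm pc show "d \<in> (\<Union>c\<in>comps_tr T z \<alpha>. {d\<in>comps_max T z. prefix c d})" by blast
  qed
  finally show ?thesis .
qed

lemma group_tr:
  fixes f :: "('a \<times> 'z pmf \<times> 'z) list \<Rightarrow> real"
  assumes "finite D" "comp_trace ` D \<subseteq> S" "finite S"
  shows "(\<Sum>d\<in>{d\<in>D. prefix \<alpha> (comp_trace d)}. f d) =
         (\<Sum>\<beta>\<in>S. if prefix \<alpha> \<beta> then (\<Sum>d\<in>{d\<in>D. comp_trace d = \<beta>}. f d) else 0)"
proof -
  have "(\<Sum>d\<in>{d\<in>D. prefix \<alpha> (comp_trace d)}. f d) =
        (\<Sum>\<beta>\<in>S. \<Sum>d\<in>{x. x \<in> {d\<in>D. prefix \<alpha> (comp_trace d)} \<and> comp_trace x = \<beta>}. f d)"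
    by (rule sum.group[symmetric]) (use assms in auto)
  also have "\<dots> = (\<Sum>\<beta>\<in>S. if prefix \<alpha> \<beta> then (\<Sum>d\<in>{d\<in>D. comp_trace d = \<beta>}. f d) else 0)"
  proof (rule sum.cong[OF refl])
    fix \<beta> show "(\<Sum>d\<in>{x. x \<in> {d\<in>D. prefix \<alpha> (comp_trace d)} \<and> comp_trace x = \<beta>}. f d) =
       (if prefix \<alpha> \<beta> then (\<Sum>d\<in>{d\<in>D. comp_trace d = \<beta>}. f d) else 0)"
    proof (cases "prefix \<alpha> \<beta>")
      case True
      then have "{x. x \<in> {d\<in>D. prefix \<alpha> (comp_trace d)} \<and> comp_trace x = \<beta>} = {d\<in>D. comp_trace d = \<beta>}"
        by auto
      with True show ?thesis by simp
    next
      case False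
      then have "{x. x \<in> {d\<in>D. prefix \<alpha> (comp_trace d)} \<and> comp_trace x = \<beta>} = {}"
        by auto
      with False show ?thesis by (metis (no_types, lifting) sum.empty)
    qed
  qed
  finally show ?thesis .
qed

lemma tracing_inj: "tracing \<alpha> = tracing \<beta> \<Longrightarrow> \<alpha> = \<beta>"
proof (induction \<alpha> arbitrary: \<beta>)
  case Nil then show ?case by (cases \<beta>) auto
next
  case (Cons a \<alpha>) then show ?case by (cases \<beta>) auto
qed

lemma tracing_surj: "\<exists>\<alpha>. \<Phi> = tracing \<alpha>"
proof (induction \<Phi>)
  case TTop then show ?case by (metis tracing.simps(1))
next
  case (Diam a \<Phi>) then show ?case by (metis tracing.simps(2))
qed

lemma mimicking_tracing:
  assumes "finite (comps_max TZ z)"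
  shows "mimicking TZ z (tracing \<alpha>) = Pr (comps_max_tr TZ z \<alpha>)"
proof -
  have "mimicking TZ z (tracing \<alpha>) = (\<Sum>\<beta>\<in>comp_trace ` comps_max TZ z.
       if \<beta> = \<alpha> then Pr (comps_max_tr TZ z \<beta>) else 0)"
    unfolding mimicking_def by (rule sum.cong[OF refl]) (auto dest: tracing_inj)
  also have "\<dots> = (if \<alpha> \<in> comp_trace ` comps_max TZ z then Pr (comps_max_tr TZ z \<alpha>) else 0)"
    using assms by (simp add: sum.delta')
  also have "\<dots> = Pr (comps_max_tr TZ z \<alpha>)"
  proof -
    have "\<alpha> \<notin> comp_trace ` comps_max TZ z \<Longrightarrow> comps_max_tr TZ z \<alpha> = {}"
      by (auto simp: comps_max_tr_def)
    then show ?thesis by (auto simp: Pr_def)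
  qed
  finally show ?thesis .
qed

lemma zero_lemma:
  fixes h :: "'a list \<Rightarrow> real"
  assumes fin: "finite S" and out: "\<forall>\<beta>. \<beta> \<notin> S \<longrightarrow> h \<beta> = 0"
    and sums: "\<forall>\<alpha>. (\<Sum>\<beta>\<in>S. if prefix \<alpha> \<beta> then h \<beta> else 0) = 0"
  shows "h \<alpha> = 0"
proof -
  define M where "M = Suc (Max (insert 0 (length ` S)))"
  have lenM: "length \<beta> < M" if "\<beta> \<in> S" for \<beta>
    using fin that unfolding M_def by (simp add: le_imp_less_Suc)
  show ?thesis
  proof (induction \<alpha> rule: measure_induct_rule[where f="\<lambda>\<alpha>. M - length \<alpha>"])
    case (less \<alpha>)
    show ?case
    proof (cases "\<alpha> \<in> S")
      case False with out show ?thesis by blast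
    next
      case True
      have "(\<Sum>\<beta>\<in>S. if prefix \<alpha> \<beta> then h \<beta> else 0) = (\<Sum>\<beta>\<in>S. if \<beta> = \<alpha> then h \<beta> else 0)"
      proof (rule sum.cong[OF refl])
        fix \<beta> assume b: "\<beta> \<in> S"
        show "(if prefix \<alpha> \<beta> then h \<beta> else 0) = (if \<beta> = \<alpha> then h \<beta> else 0)"
        proof (cases "prefix \<alpha> \<beta> \<and> \<beta> \<noteq> \<alpha>")
          case True
          then have "length \<alpha> < length \<beta>"
            by (metis prefix_length_less strict_prefix_def)
          with lenM[OF b] have "M - length \<beta> < M - length \<alpha>" by simp
          with less.IH have "h \<beta> = 0" by blast
          with True show ?thesis by simp
        next
          case False then show ?thesis by auto
        qed
      qed
      also have "\<dots> = h \<alpha>" using fin True by (simp add: sum.delta')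
      finally show ?thesis using sums by simp
    qed
  qed
qed


lemma res_comp:
  assumes res: "is_resolution T s Z TZ corr z0"
  shows "c \<in> comps TZ z \<Longrightarrow> \<exists>c'. c' \<in> comps T (corr z) \<and> length c' = length c"
proof (induction c arbitrary: z)
  case Nil then show ?case by (intro exI[of _ "[]"]) simp
next
  case (Cons x c)
  obtain a \<pi> z' where x: "x = (a,\<pi>,z')" by (cases x) auto
  with Cons.prems have tr: "(z,a,\<pi>) \<in> TZ" and z': "z' \<in> set_pmf \<pi>" and c: "c \<in> comps TZ z'" by auto
  from res tr obtain \<pi>' where tr': "(corr z, a, \<pi>') \<in> T"
    and eq: "\<forall>z''\<in>set_pmf \<pi>. pmf \<pi> z'' = pmf \<pi>' (corr z'')"
    unfolding is_resolution_def by fast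
  from z' eq have "pmf \<pi>' (corr z') > 0" by (metis pmf_positive)
  then have cz: "corr z' \<in> set_pmf \<pi>'" by (simp add: set_pmf_iff)
  from Cons.IH[OF c] obtain c' where "c' \<in> comps T (corr z')" "length c' = length c" by blast
  with tr' cz show ?case by (intro exI[of _ "(a,\<pi>',corr z') # c'"]) (simp add: x)
qed

lemma res_bound:
  assumes res: "is_resolution T s Z TZ corr z0" and fp: "finite_process T s"
  shows "\<exists>N. \<forall>c\<in>comps TZ z0. length c \<le> N"
proof -
  from fp obtain N where N: "\<forall>c\<in>comps T s. length c \<le> N" by (auto simp: finite_process_def)
  have cs: "corr z0 = s" using res by (simp add: is_resolution_def)
  show ?thesis
  proof (intro exI ballI)
    fix c assume "c \<in> comps TZ z0"
    from res_comp[OF res this] cs N show "length c \<le> N" by force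
  qed
qed

lemma res_det:
  assumes "is_resolution T s Z TZ corr z0" shows "detT TZ"
  using assms unfolding is_resolution_def detT_def by blast

lemma res_fsupp:
  assumes res: "is_resolution T s Z TZ corr z0" and fT: "fin_supp_pts T"
  shows "fsupp TZ"
  unfolding fsupp_def
proof (clarify)
  fix z a \<pi> assume tr: "(z,a,\<pi>) \<in> TZ"
  from res tr obtain \<pi>' where tr': "(corr z, a, \<pi>') \<in> T"
    and eq: "\<forall>z''\<in>set_pmf \<pi>. pmf \<pi> z'' = pmf \<pi>' (corr z'')"
    unfolding is_resolution_def by fast
  have fs': "finite (set_pmf \<pi>')" using fT tr' unfolding fin_supp_pts_def by auto
  define V where "V = pmf \<pi>' ` set_pmf \<pi>'"
  have fV: "finite V" using fs' by (simp add: V_def)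
  show "finite (set_pmf \<pi>)"
  proof (rule ccontr)
    assume inf: "infinite (set_pmf \<pi>)"
    obtain z0 where "z0 \<in> set_pmf \<pi>" using set_pmf_not_empty by fast
    then have "corr z0 \<in> set_pmf \<pi>'" using eq by (metis pmf_positive set_pmf_iff less_irrefl)
    then have neV: "V \<noteq> {}" by (auto simp: V_def)
    define m where "m = Min V"
    have mpos: "m > 0" using fV neV unfolding m_def V_def by (auto simp: pmf_positive)
    have lb: "pmf \<pi> x \<ge> m" if "x \<in> set_pmf \<pi>" for x
    proof -
      have "pmf \<pi>' (corr x) > 0" using that eq by (metis pmf_positive)
      then have "corr x \<in> set_pmf \<pi>'" by (simp add: set_pmf_iff)
      then have "pmf \<pi>' (corr x) \<in> V" by (simp add: V_def)
      then have "m \<le> pmf \<pi>' (corr x)" using fV unfolding m_def by simp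
      with that eq show ?thesis by simp
    qed
    obtain k :: nat where k: "real k > 1 / m" using reals_Archimedean2 by blast
    obtain B where B: "finite B" "card B = k" "B \<subseteq> set_pmf \<pi>"
      using infinite_arbitrarily_large[OF inf] by blast
    have "real k * m = (\<Sum>x\<in>B. m)" using B by simp
    also have "\<dots> \<le> (\<Sum>x\<in>B. pmf \<pi> x)" using B lb by (intro sum_mono) auto
    also have "\<dots> = measure_pmf.prob \<pi> B" using B by (simp add: measure_measure_pmf_finite)
    also have "\<dots> \<le> 1" by simp
    finally have "real k * m \<le> 1" .
    moreover have "real k * m > 1" using k mpos by (simp add: field_simps)
    ultimately show False by simp
  qed
qed

theorem theorem9:
  fixes T :: "('s,'a) pts"
    and Zs :: "'z1 set" and TZs :: "('z1,'a) pts" and corrs :: "'z1 \<Rightarrow> 's" and zs :: 'z1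
    and Zt :: "'z2 set" and TZt :: "('z2,'a) pts" and corrt :: "'z2 \<Rightarrow> 's" and zt :: 'z2
  assumes "fin_supp_pts T" and "image_finite T"
    and "finite_process T s" and "finite_process T t"
    and "is_resolution T s Zs TZs corrs zs"
    and "is_resolution T t Zt TZt corrt zt"
  shows "mimicking TZs zs = mimicking TZt zt \<longleftrightarrow>
         (\<forall>\<alpha>. Pr (comps_tr TZs zs \<alpha>) = Pr (comps_tr TZt zt \<alpha>))"
proof -
  note rs = assms(5) and rt = assms(6)
  obtain Ns where bs: "\<forall>c\<in>comps TZs zs. length c \<le> Ns" using res_bound[OF rs assms(3)] by blast
  obtain Nt where bt: "\<forall>c\<in>comps TZt zt. length c \<le> Nt" using res_bound[OF rt assms(4)] by blast
  have ds: "detT TZs" by (rule res_det[OF rs])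
  have dt: "detT TZt" by (rule res_det[OF rt])
  have fss: "fsupp TZs" by (rule res_fsupp[OF rs assms(1)])
  have fst: "fsupp TZt" by (rule res_fsupp[OF rt assms(1)])
  have fms: "finite (comps_max TZs zs)"
    using conjunct1[OF mass[OF ds fss bs]] by (rule rev_finite_subset) (auto simp: comps_max_def)
  have fmt: "finite (comps_max TZt zt)"
    using conjunct1[OF mass[OF dt fst bt]] by (rule rev_finite_subset) (auto simp: comps_max_def)
  define Ms where "Ms = (\<lambda>\<alpha>. Pr (comps_max_tr TZs zs \<alpha>))"
  define Mt where "Mt = (\<lambda>\<alpha>. Pr (comps_max_tr TZt zt \<alpha>))"
  have step1: "mimicking TZs zs = mimicking TZt zt \<longleftrightarrow> (\<forall>\<alpha>. Ms \<alpha> = Mt \<alpha>)"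
  proof
    assume "mimicking TZs zs = mimicking TZt zt"
    then show "\<forall>\<alpha>. Ms \<alpha> = Mt \<alpha>"
      using mimicking_tracing[OF fms] mimicking_tracing[OF fmt] unfolding Ms_def Mt_def by metis
  next
    assume e: "\<forall>\<alpha>. Ms \<alpha> = Mt \<alpha>"
    show "mimicking TZs zs = mimicking TZt zt"
    proof
      fix \<Phi> :: "'a trace_formula"
      obtain \<alpha> where "\<Phi> = tracing \<alpha>" using tracing_surj by blast
      then show "mimicking TZs zs \<Phi> = mimicking TZt zt \<Phi>"
        using mimicking_tracing[OF fms] mimicking_tracing[OF fmt] e unfolding Ms_def Mt_def by metis
    qed
  qed
  define S where "S = comp_trace ` comps_max TZs zs \<union> comp_trace ` comps_max TZt zt"
  have fS: "finite S" using fms fmt by (simp add: S_def)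
  have Ps: "Pr (comps_tr TZs zs \<alpha>) = (\<Sum>\<beta>\<in>S. if prefix \<alpha> \<beta> then Ms \<beta> else 0)" for \<alpha>
    unfolding P_eq[OF ds fss bs]
    unfolding Ms_def comps_max_tr_def Pr_def
    by (rule group_tr) (use fms fS in \<open>auto simp: S_def\<close>)
  have Pt: "Pr (comps_tr TZt zt \<alpha>) = (\<Sum>\<beta>\<in>S. if prefix \<alpha> \<beta> then Mt \<beta> else 0)" for \<alpha>
    unfolding P_eq[OF dt fst bt]
    unfolding Mt_def comps_max_tr_def Pr_def
    by (rule group_tr) (use fmt fS in \<open>auto simp: S_def\<close>)
  have step2: "(\<forall>\<alpha>. Ms \<alpha> = Mt \<alpha>) \<longleftrightarrow> (\<forall>\<alpha>. Pr (comps_tr TZs zs \<alpha>) = Pr (comps_tr TZt zt \<alpha>))"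
  proof
    assume "\<forall>\<alpha>. Ms \<alpha> = Mt \<alpha>"
    then have MM: "Ms = Mt" by blast
    show "\<forall>\<alpha>. Pr (comps_tr TZs zs \<alpha>) = Pr (comps_tr TZt zt \<alpha>)" 
    proof (rule allI)
      fix \<alpha>
      show "Pr (comps_tr TZs zs \<alpha>) = Pr (comps_tr TZt zt \<alpha>)"
        unfolding Ps Pt MM by (rule refl)
    qed
  next
    assume e: "\<forall>\<alpha>. Pr (comps_tr TZs zs \<alpha>) = Pr (comps_tr TZt zt \<alpha>)"
    define h where "h = (\<lambda>\<beta>. Ms \<beta> - Mt \<beta>)"
    have out: "\<forall>\<beta>. \<beta> \<notin> S \<longrightarrow> h \<beta> = 0"
    proof (intro allI impI)
      fix \<beta> assume "\<beta> \<notin> S"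
      then have "comps_max_tr TZs zs \<beta> = {}" "comps_max_tr TZt zt \<beta> = {}"
        by (auto simp: S_def comps_max_tr_def)
      then show "h \<beta> = 0" by (simp add: h_def Ms_def Mt_def Pr_def)
    qed
    have sums: "\<forall>\<alpha>. (\<Sum>\<beta>\<in>S. if prefix \<alpha> \<beta> then h \<beta> else 0) = 0"
    proof
      fix \<alpha>
      have "(\<Sum>\<beta>\<in>S. if prefix \<alpha> \<beta> then h \<beta> else 0) =
            (\<Sum>\<beta>\<in>S. (if prefix \<alpha> \<beta> then Ms \<beta> else 0) - (if prefix \<alpha> \<beta> then Mt \<beta> else 0))"
        by (rule sum.cong) (auto simp: h_def)
      also have "\<dots> = Pr (comps_tr TZs zs \<alpha>) - Pr (comps_tr TZt zt \<alpha>)"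
        unfolding Ps Pt by (simp add: sum_subtractf)
      also have "\<dots> = 0" using e by simp
      finally show "(\<Sum>\<beta>\<in>S. if prefix \<alpha> \<beta> then h \<beta> else 0) = 0" .
    qed
    have "h \<alpha> = 0" for \<alpha> by (rule zero_lemma[OF fS out sums])
    then show "\<forall>\<alpha>. Ms \<alpha> = Mt \<alpha>" by (simp add: h_def)
  qed
  from step1 step2 show ?thesis by simp
qed

end
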